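(* Let $(\mathcal{X}_1,\Phi_1)$ be a connected matroid that is even representable but not almost odd representable, and let $(\mathcal{X}_2,\Phi_2)$ be a connected matroid that is odd representable but not almost even representable, where $\mathcal{X}_1\cap\mathcal{X}_2=\emptyset$. Let $(\mathcal{X},\Phi)$ be their direct sum: $\mathcal{X}=\mathcal{X}_1\cup\mathcal{X}_2$ and $\Phi(\mathcal{A})=\Phi_1(\mathcal{A}\cap\mathcal{X}_1)+\Phi_2(\mathcal{A}\cap\mathcal{X}_2)$ for all $\mathcal{A}\subseteq\mathcal{X}$. Let $0<\epsilon\le\min(\Phi_1(\mathcal{X}_1),\Phi_2(\mathcal{X}_2))$ and define $\Phi^\epsilon(\mathcal{A})=\min\big(\Phi(\mathcal{A}),\ \Phi(\mathcal{X})-\epsilon\big)$ for all $\mathcal{A}\subseteq\mathcal{X}$. Then $(\mathcal{X},\Phi^\epsilon)$ is not cc-representable.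
   Context: A polymatroid $(\mathcal{X},\mathbf{h})$ is a finite ground set $\mathcal{X}=\{X_1,\dots,X_n\}$ with $\mathbf{h}:2^{\mathcal{X}}\to\mathbb{R}_{\ge0}$ satisfying $\mathbf{h}(\emptyset)=0$, monotonicity and submodularity; a matroid additionally has integer values with $\mathbf{h}(\mathcal{A})\le|\mathcal{A}|$. A matroid is connected if every two elements lie in a common circuit. The polymatroid is $q$-representable if there exist subspaces $V_1,\dots,V_n$ of a vector space over $\mathbb{F}_q$ with $\mathbf{h}(\{X_i:i\in\alpha\})=\dim\langle V_i:i\in\alpha\rangle$ for all $\alpha$; representable if $q$-representable for some $q$; even representable if $2^m$-representable for some positive integer $m$; odd representable if $p^m$-representable for some odd prime $p$ and positive integer $m$. Rank functions are vectors in $\mathbb{R}^{2^{|\mathcal{X}|}}$. A rank function is almost even (resp. almost odd) representable if it equals $\lim_{i\to\infty}c_i\mathbf{g}_i$ for some even (resp. odd) representable rank functions $\mathbf{g}_i$ on the same ground set and positive reals $c_i$. It is cc-representable if it lies in the closure of the minimal convex cone containing all representable rank functions on $\mathcal{X}$. *)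

theory Defs
  imports Complex_Main "HOL-Algebra.Ring" "HOL-Computational_Algebra.Primes"
begin

text \<open>A rank function on the finite ground set X is a function on sets; only its
values on subsets of X are relevant (it is a vector indexed by the subsets of X).\<close>

definition polymatroid :: "'e set \<Rightarrow> ('e set \<Rightarrow> real) \<Rightarrow> bool" where
  "polymatroid X h \<longleftrightarrow> finite X \<and> h {} = 0 \<and>
     (\<forall>A. A \<subseteq> X \<longrightarrow> h A \<ge> 0) \<and>
     (\<forall>A B. A \<subseteq> B \<and> B \<subseteq> X \<longrightarrow> h A \<le> h B) \<and>
     (\<forall>A B. A \<subseteq> X \<and> B \<subseteq> X \<longrightarrow> h (A \<union> B) + h (A \<inter> B) \<le> h A + h B)"

definition matroid :: "'e set \<Rightarrow> ('e set \<Rightarrow> real) \<Rightarrow> bool" where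
  "matroid X h \<longleftrightarrow> polymatroid X h \<and>
     (\<forall>A. A \<subseteq> X \<longrightarrow> h A \<in> \<int> \<and> h A \<le> real (card A))"

definition circuit :: "'e set \<Rightarrow> ('e set \<Rightarrow> real) \<Rightarrow> 'e set \<Rightarrow> bool" where
  "circuit X h C \<longleftrightarrow> C \<subseteq> X \<and> h C < real (card C) \<and>
     (\<forall>D. D \<subset> C \<longrightarrow> h D = real (card D))"

definition connected_matroid :: "'e set \<Rightarrow> ('e set \<Rightarrow> real) \<Rightarrow> bool" where
  "connected_matroid X h \<longleftrightarrow> matroid X h \<and>
     (\<forall>x\<in>X. \<forall>y\<in>X. x \<noteq> y \<longrightarrow> (\<exists>C. circuit X h C \<and> x \<in> C \<and> y \<in> C))"

definition fvecs :: "'a ring \<Rightarrow> nat \<Rightarrow> (nat \<Rightarrow> 'a) set" where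
  "fvecs R d = {v. (\<forall>i<d. v i \<in> carrier R) \<and> (\<forall>i. d \<le> i \<longrightarrow> v i = \<zero>\<^bsub>R\<^esub>)}"

definition lin_span :: "'a ring \<Rightarrow> nat \<Rightarrow> (nat \<Rightarrow> 'a) set \<Rightarrow> (nat \<Rightarrow> 'a) set" where
  "lin_span R d S = {v. \<exists>(n::nat) (vs :: nat \<Rightarrow> nat \<Rightarrow> 'a) (c :: nat \<Rightarrow> 'a).
      (\<forall>j<n. vs j \<in> S \<and> c j \<in> carrier R) \<and>
      v = (\<lambda>i. if i < d then finsum R (\<lambda>j. c j \<otimes>\<^bsub>R\<^esub> vs j i) {..<n} else \<zero>\<^bsub>R\<^esub>)}"

definition subspace :: "'a ring \<Rightarrow> nat \<Rightarrow> (nat \<Rightarrow> 'a) set \<Rightarrow> bool" where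
  "subspace R d W \<longleftrightarrow> W \<subseteq> fvecs R d \<and> lin_span R d W = W"

definition fdim :: "'a ring \<Rightarrow> nat \<Rightarrow> (nat \<Rightarrow> 'a) set \<Rightarrow> nat" where
  "fdim R d W = (LEAST n. \<exists>vs :: nat \<Rightarrow> nat \<Rightarrow> 'a.
      (\<forall>j<n. vs j \<in> W) \<and> lin_span R d (vs ` {..<n}) = W)"

text \<open>Every finite field is
isomorphic to one with carrier in nat, and the sum of the subspaces is finite dimensional,
so coordinate spaces F^d suffice.\<close>
definition q_representable :: "nat \<Rightarrow> 'e set \<Rightarrow> ('e set \<Rightarrow> real) \<Rightarrow> bool" where
  "q_representable q X h \<longleftrightarrow> polymatroid X h \<and>
     (\<exists>(R :: nat ring) (d::nat) (V :: 'e \<Rightarrow> (nat \<Rightarrow> nat) set).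
        field R \<and> finite (carrier R) \<and> card (carrier R) = q \<and>
        (\<forall>x\<in>X. subspace R d (V x)) \<and>
        (\<forall>A. A \<subseteq> X \<longrightarrow> h A = real (fdim R d (lin_span R d (\<Union>x\<in>A. V x)))))"

definition representable :: "'e set \<Rightarrow> ('e set \<Rightarrow> real) \<Rightarrow> bool" where
  "representable X h \<longleftrightarrow> (\<exists>q. q_representable q X h)"

definition even_representable :: "'e set \<Rightarrow> ('e set \<Rightarrow> real) \<Rightarrow> bool" where
  "even_representable X h \<longleftrightarrow> (\<exists>m::nat. m > 0 \<and> q_representable (2 ^ m) X h)"

definition odd_representable :: "'e set \<Rightarrow> ('e set \<Rightarrow> real) \<Rightarrow> bool" where
  "odd_representable X h \<longleftrightarrow>
     (\<exists>(p::nat) (m::nat). prime p \<and> odd p \<and> m > 0 \<and> q_representable (p ^ m) X h)"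

text \<open>Limits in R^(2^|X|): coordinatewise convergence on all subsets of X.\<close>
definition almost_even_representable :: "'e set \<Rightarrow> ('e set \<Rightarrow> real) \<Rightarrow> bool" where
  "almost_even_representable X h \<longleftrightarrow>
     (\<exists>(g :: nat \<Rightarrow> 'e set \<Rightarrow> real) (c :: nat \<Rightarrow> real).
        (\<forall>i. even_representable X (g i) \<and> c i > 0) \<and>
        (\<forall>A. A \<subseteq> X \<longrightarrow> (\<lambda>i. c i * g i A) \<longlonglongrightarrow> h A))"

definition almost_odd_representable :: "'e set \<Rightarrow> ('e set \<Rightarrow> real) \<Rightarrow> bool" where
  "almost_odd_representable X h \<longleftrightarrow>
     (\<exists>(g :: nat \<Rightarrow> 'e set \<Rightarrow> real) (c :: nat \<Rightarrow> real).
        (\<forall>i. odd_representable X (g i) \<and> c i > 0) \<and>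
        (\<forall>A. A \<subseteq> X \<longrightarrow> (\<lambda>i. c i * g i A) \<longlonglongrightarrow> h A))"

text \<open>The minimal convex cone containing all representable rank functions on X:
all nonnegative finite combinations (as vectors indexed by the subsets of X).\<close>
definition rep_cone :: "'e set \<Rightarrow> ('e set \<Rightarrow> real) set" where
  "rep_cone X = {f. \<exists>(n::nat) (c :: nat \<Rightarrow> real) (g :: nat \<Rightarrow> 'e set \<Rightarrow> real).
       (\<forall>j<n. c j \<ge> 0 \<and> representable X (g j)) \<and>
       (\<forall>A. A \<subseteq> X \<longrightarrow> f A = (\<Sum>j<n. c j * g j A))}"

text \<open>Closure in the finite-dimensional space R^(2^|X|) = sequential closure.\<close>
definition cc_representable :: "'e set \<Rightarrow> ('e set \<Rightarrow> real) \<Rightarrow> bool" where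
  "cc_representable X h \<longleftrightarrow>
     (\<exists>f :: nat \<Rightarrow> 'e set \<Rightarrow> real. (\<forall>i. f i \<in> rep_cone X) \<and>
        (\<forall>A. A \<subseteq> X \<longrightarrow> (\<lambda>i. f i A) \<longlonglongrightarrow> h A))"

end

theory Submission
  imports Defs "HOL-Algebra.Multiplicative_Group" "HOL-Algebra.Sylow"
begin


lemma nat_all_factors_prime_power:
  fixes n p :: nat
  assumes "prime p" "n > 0" "\<And>q. prime q \<Longrightarrow> q dvd n \<Longrightarrow> q = p"
  shows "n = p ^ multiplicity p n"
proof -
  define m where "m = n div p ^ multiplicity p n"
  have nd: "\<not> p dvd m" unfolding m_def
    using multiplicity_decompose[of n p] assms(1,2) prime_gt_1_nat[of p] by auto
  have dec: "n = p ^ multiplicity p n * m" unfolding m_def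
    by (simp add: multiplicity_dvd)
  have "m = 1"
  proof (rule ccontr)
    assume "m \<noteq> 1"
    then obtain q where q: "prime q" "q dvd m" using prime_factor_nat by blast
    then have "q dvd n" using dec by (metis dvd_mult)
    then have "q = p" using assms q by blast
    then show False using nd q by simp
  qed
  then show ?thesis using dec by simp
qed

lemma (in field) card_prime_power:
  assumes fin: "finite (carrier R)"
  shows "\<exists>p m. prime p \<and> m > 0 \<and> card (carrier R) = p ^ m"
proof -
  let ?G = "add_monoid R"
  have grp: "group ?G" by (rule add.group_axioms)
  have ordG: "order ?G = card (carrier R)" by (simp add: order_def)
  have cpos: "card (carrier R) > 0" using fin by (auto simp: card_gt_0_iff)
  define p where "p = add.ord \<one>"
  have pdvd: "p dvd card (carrier R)"
    using group.ord_dvd_group_order[OF grp, of \<one>] ordG p_def by simp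
  have p0: "p \<noteq> 0" using pdvd cpos by auto
  have p1: "p \<noteq> 1" using add.ord_eq_1[of \<one>] p_def by simp
  have pz: "[p] \<cdot> \<one> = \<zero>" using add.pow_eq_id[of \<one> p] p_def by simp
  have mul: "([a] \<cdot> \<one>) \<otimes> ([b] \<cdot> \<one>) = [(a * b)] \<cdot> \<one>" for a b :: nat
  proof -
    have "([a] \<cdot> \<one>) \<otimes> ([b] \<cdot> \<one>) = [a] \<cdot> (\<one> \<otimes> ([b] \<cdot> \<one>))"
      by (simp add: add_pow_ldistr)
    also have "\<dots> = [a] \<cdot> ([b] \<cdot> \<one>)" by simp
    also have "\<dots> = [(a * b)] \<cdot> \<one>"
      using add.nat_pow_pow[of \<one> a b] by (simp add: mult.commute)
    finally show ?thesis .
  qed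
  have prp: "prime p"
  proof -
    have "p > 1" using p0 p1 by simp
    moreover have "a = 1 \<or> a = p" if "a dvd p" for a
    proof -
      obtain b where b: "p = a * b" using \<open>a dvd p\<close> by blast
      have "([a] \<cdot> \<one>) \<otimes> ([b] \<cdot> \<one>) = \<zero>" using mul b pz by simp
      then have "[a] \<cdot> \<one> = \<zero> \<or> [b] \<cdot> \<one> = \<zero>"
        using integral by auto
      then have "p dvd a \<or> p dvd b" using add.pow_eq_id[of \<one>] p_def by auto
      then show ?thesis
      proof
        assume "p dvd a" then show ?thesis using \<open>a dvd p\<close> dvd_antisym by blast
      next
        assume "p dvd b"
        moreover have "b dvd p" using b by simp
        ultimately have "b = p" using dvd_antisym by blast
        then show ?thesis using b p0 by simp
      qed
    qed
    ultimately show ?thesis by (simp add: prime_nat_iff)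
  qed
  have px: "add.ord x dvd p" if "x \<in> carrier R" for x
  proof -
    have "[p] \<cdot> x = ([p] \<cdot> \<one>) \<otimes> x" using that add_pow_ldistr[of \<one> x p] by simp
    also have "\<dots> = \<zero>" using pz that by simp
    finally show ?thesis using add.pow_eq_id[OF that] by simp
  qed
  have "q = p" if q: "prime q" "q dvd card (carrier R)" for q
  proof -
    obtain m where m: "card (carrier R) = q ^ 1 * m" using q by auto
    obtain H where H: "subgroup H ?G" "card H = q ^ 1"
      using sylow_thm[OF q(1) grp, of 1 m] m ordG fin by auto
    have finH: "finite H" using subgroup.subset[OF H(1)] fin by (auto intro: finite_subset)
    have "card H \<ge> 2" using H q prime_ge_2_nat by simp
    have "H - {\<zero>} \<noteq> {}"
    proof
      assume "H - {\<zero>} = {}"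
      then have "H \<subseteq> {\<zero>}" by blast
      then have "card H \<le> 1" using card_mono[of "{\<zero>}" H] by simp
      then show False using \<open>card H \<ge> 2\<close> by simp
    qed
    then obtain x where x: "x \<in> H" "x \<noteq> \<zero>" by blast
    have xc: "x \<in> carrier R" using x H(1) subgroup.subset by fastforce
    have g2: "group (?G\<lparr>carrier := H\<rparr>)" using subgroup.subgroup_is_group[OF H(1) grp] .
    have "x [^]\<^bsub>?G\<lparr>carrier := H\<rparr>\<^esub> order (?G\<lparr>carrier := H\<rparr>) = \<one>\<^bsub>?G\<lparr>carrier := H\<rparr>\<^esub>"
      using group.pow_order_eq_1[OF g2, of x] x by simp
    then have "x [^]\<^bsub>?G\<^esub> q = \<zero>"
      using monoid.nat_pow_consistent[of ?G x q H] add.monoid_axioms H(2)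
      by (simp add: order_def)
    then have "[q] \<cdot> x = \<zero>" by (simp add: add_pow_def)
    then have oq: "add.ord x dvd q" using add.pow_eq_id[OF xc] by simp
    have op: "add.ord x dvd p" using px[OF xc] .
    have "add.ord x \<noteq> 1" using add.ord_eq_1[OF xc] x by simp
    then have "add.ord x = q" using oq q(1) prime_nat_iff by blast
    then show "q = p" using op q(1) prp by (simp add: primes_dvd_imp_eq)
  qed
  then have "card (carrier R) = p ^ multiplicity p (card (carrier R))"
    using nat_all_factors_prime_power[OF prp cpos] by blast
  moreover have "multiplicity p (card (carrier R)) > 0"
    using pdvd prp cpos by (simp add: prime_multiplicity_gt_zero_iff)
  ultimately show ?thesis using prp by blast
qed



lemma rep_even_or_odd:
  assumes "representable X g"
  shows "even_representable X g \<or> odd_representable X g"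
proof -
  obtain q where q: "q_representable q X g" using assms unfolding representable_def by blast
  then obtain R :: "nat ring" where R: "field R" "finite (carrier R)" "card (carrier R) = q"
    unfolding q_representable_def by (elim conjE exE) fast
  obtain p m where pm: "prime p" "m > 0" "card (carrier R) = p ^ m"
    using field.card_prime_power[OF R(1) R(2)] by blast
  have qpm: "q = p ^ m" using pm(3) R(3) by simp
  show ?thesis
  proof (cases "p = 2")
    case True
    then have "q_representable (2 ^ m) X g" using q qpm by (simp only:)
    then show ?thesis using pm(2) unfolding even_representable_def by blast
  next
    case False
    have "2 < p" using prime_ge_2_nat[OF pm(1)] False by linarith
    then have "odd p" using pm(1) prime_odd_nat[of p] by simp
    have "q_representable (p ^ m) X g" using q qpm by (simp only:)
    then show ?thesis using pm(1,2) \<open>odd p\<close> unfolding odd_representable_def by blast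
  qed
qed

lemma polymatroidD:
  assumes "polymatroid X g"
  shows "finite X" "g {} = 0" "\<And>A. A \<subseteq> X \<Longrightarrow> g A \<ge> 0"
    "\<And>A B. A \<subseteq> B \<Longrightarrow> B \<subseteq> X \<Longrightarrow> g A \<le> g B"
    "\<And>A B. A \<subseteq> X \<Longrightarrow> B \<subseteq> X \<Longrightarrow> g (A \<union> B) + g (A \<inter> B) \<le> g A + g B"
  using assms unfolding polymatroid_def by blast+

lemma polymatroidI:
  assumes "finite X" "g {} = 0" "\<And>A. A \<subseteq> X \<Longrightarrow> g A \<ge> 0"
    "\<And>A B. A \<subseteq> B \<Longrightarrow> B \<subseteq> X \<Longrightarrow> g A \<le> g B"
    "\<And>A B. A \<subseteq> X \<Longrightarrow> B \<subseteq> X \<Longrightarrow> g (A \<union> B) + g (A \<inter> B) \<le> g A + g B"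
  shows "polymatroid X g"
  using assms unfolding polymatroid_def by blast

lemma polymatroid_restrict:
  assumes "polymatroid X g" "Y \<subseteq> X"
  shows "polymatroid Y g"
proof (rule polymatroidI)
  show "finite Y" using polymatroidD(1)[OF assms(1)] assms(2) by (rule finite_subset[rotated])
  show "g {} = 0" by (rule polymatroidD(2)[OF assms(1)])
  show "g A \<ge> 0" if "A \<subseteq> Y" for A using polymatroidD(3)[OF assms(1)] that assms(2) by blast
  show "g A \<le> g B" if "A \<subseteq> B" "B \<subseteq> Y" for A B
    using polymatroidD(4)[OF assms(1) that(1)] that(2) assms(2) by blast
  show "g (A \<union> B) + g (A \<inter> B) \<le> g A + g B" if "A \<subseteq> Y" "B \<subseteq> Y" for A B
    using polymatroidD(5)[OF assms(1)] that assms(2) by blast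
qed

lemma q_rep_restrict:
  assumes "q_representable q X g" "Y \<subseteq> X"
  shows "q_representable q Y g"
proof -
  have H1: "polymatroid X g" using assms(1) unfolding q_representable_def by (rule conjunct1)
  have EX: "\<exists>(R :: nat ring) (d::nat) (V :: 'a \<Rightarrow> (nat \<Rightarrow> nat) set).
        field R \<and> finite (carrier R) \<and> card (carrier R) = q \<and>
        (\<forall>x\<in>X. subspace R d (V x)) \<and>
        (\<forall>A. A \<subseteq> X \<longrightarrow> g A = real (fdim R d (lin_span R d (\<Union>x\<in>A. V x))))"
    using assms(1) unfolding q_representable_def by (rule conjunct2)
  then obtain R :: "nat ring" and d V where H: "field R \<and> finite (carrier R) \<and> card (carrier R) = q \<and>
        (\<forall>x\<in>X. subspace R d (V x)) \<and>
        (\<forall>A. A \<subseteq> X \<longrightarrow> g A = real (fdim R d (lin_span R d (\<Union>x\<in>A. V x))))"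
    by (elim exE) (erule that)
  have S1: "\<forall>x\<in>Y. subspace R d (V x)" using H assms(2) by blast
  have S2: "\<forall>A. A \<subseteq> Y \<longrightarrow> g A = real (fdim R d (lin_span R d (\<Union>x\<in>A. V x)))"
    using H assms(2) by (meson order_trans)
  have S3: "polymatroid Y g" using polymatroid_restrict[OF H1 assms(2)] .
  show ?thesis unfolding q_representable_def
    apply (rule conjI[OF S3])
    apply (rule exI[where x=R], rule exI[where x=d], rule exI[where x=V])
    using H S1 S2 by (intro conjI) simp_all
qed

lemma even_rep_restrict:
  assumes "even_representable X g" "Y \<subseteq> X" shows "even_representable Y g"
proof -
  obtain m where "m > 0" "q_representable (2 ^ m) X g" using assms(1) unfolding even_representable_def by (elim exE conjE)
  then show ?thesis using q_rep_restrict[OF _ assms(2)] unfolding even_representable_def by (intro exI[where x=m]) simp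
qed

lemma odd_rep_restrict:
  assumes "odd_representable X g" "Y \<subseteq> X" shows "odd_representable Y g"
proof -
  obtain p m where "prime p" "odd p" "m > 0" "q_representable (p ^ m) X g"
    using assms(1) unfolding odd_representable_def by (elim exE conjE)
  then show ?thesis using q_rep_restrict[OF _ assms(2)] unfolding odd_representable_def
    by (intro exI[where x=p] exI[where x=m]) simp
qed

lemma representable_polymatroid: "representable X g \<Longrightarrow> polymatroid X g"
  unfolding representable_def q_representable_def by (elim exE conjE)

definition pm :: "'e set \<Rightarrow> ('e set \<Rightarrow> real) \<Rightarrow> bool" where
  "pm Y h \<longleftrightarrow> h {} = 0 \<and> (\<forall>A B. A \<subseteq> B \<and> B \<subseteq> Y \<longrightarrow> h A \<le> h B) \<and>
     (\<forall>A B. A \<subseteq> Y \<and> B \<subseteq> Y \<longrightarrow> h (A \<union> B) + h (A \<inter> B) \<le> h A + h B)"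

lemma pmD:
  assumes "pm Y h"
  shows "h {} = 0" "\<And>A B. A \<subseteq> B \<Longrightarrow> B \<subseteq> Y \<Longrightarrow> h A \<le> h B"
    "\<And>A B. A \<subseteq> Y \<Longrightarrow> B \<subseteq> Y \<Longrightarrow> h (A \<union> B) + h (A \<inter> B) \<le> h A + h B"
  using assms unfolding pm_def by blast+

lemma pm_scale_restrict:
  assumes "polymatroid X g" "Y \<subseteq> X" "c \<ge> 0"
  shows "pm Y (\<lambda>A. c * g A)"
  unfolding pm_def
proof (intro conjI allI impI)
  show "c * g {} = 0" using polymatroidD(2)[OF assms(1)] by simp
  fix A B
  assume AB: "A \<subseteq> B \<and> B \<subseteq> Y"
  have "g A \<le> g B" using polymatroidD(4)[OF assms(1)] AB assms(2) by blast
  then show "c * g A \<le> c * g B" using assms(3) by (rule mult_left_mono)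
next
  fix A B
  assume AB: "A \<subseteq> Y \<and> B \<subseteq> Y"
  have "g (A \<union> B) + g (A \<inter> B) \<le> g A + g B" using polymatroidD(5)[OF assms(1)] AB assms(2) by blast
  then have "c * (g (A \<union> B) + g (A \<inter> B)) \<le> c * (g A + g B)" using assms(3) by (rule mult_left_mono)
  then show "c * g (A \<union> B) + c * g (A \<inter> B) \<le> c * g A + c * g B" by (simp add: distrib_left)
qed

lemma pm_nonneg: "pm Y h \<Longrightarrow> A \<subseteq> Y \<Longrightarrow> h A \<ge> 0"
  using pmD(1)[of Y h] pmD(2)[of Y h "{}" A] by simp

lemma pm_subadd:
  assumes "pm Y h" "finite I" "I \<subseteq> Y"
  shows "h I \<le> (\<Sum>e\<in>I. h {e})"
  using assms(2,3)
proof (induction I rule: finite_induct)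
  case empty then show ?case using pmD(1)[OF assms(1)] by simp
next
  case (insert x F)
  have "h ({x} \<union> F) + h ({x} \<inter> F) \<le> h {x} + h F"
    using pmD(3)[OF assms(1), of "{x}" F] insert by simp
  moreover have "{x} \<inter> F = {}" using insert by auto
  ultimately have "h (insert x F) \<le> h {x} + h F" using pmD(1)[OF assms(1)] by simp
  then show ?case using insert by simp
qed



lemma matroidD:
  assumes "matroid Y r"
  shows "polymatroid Y r" "\<And>A. A \<subseteq> Y \<Longrightarrow> r A \<in> \<int>" "\<And>A. A \<subseteq> Y \<Longrightarrow> r A \<le> real (card A)"
  using assms unfolding matroid_def by blast+

lemma int_squeeze:
  assumes "x \<in> \<int>" "real n \<le> x" "x < real n + 1"
  shows "x = real n"
proof -
  obtain z where z: "x = of_int z" using assms(1) Ints_cases by blast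
  have "int n \<le> z" using assms(2) z by linarith
  moreover have "z < int n + 1" using assms(3) z by linarith
  ultimately have "z = int n" by linarith
  then show ?thesis using z by simp
qed

lemma indep_subset:
  assumes M: "matroid Y r" and I: "I \<subseteq> Y" "r I = real (card I)" and J: "J \<subseteq> I"
  shows "r J = real (card J)"
proof -
  note P = matroidD(1)[OF M]
  have fin: "finite I" using polymatroidD(1)[OF P] I(1) finite_subset by blast
  have "r (J \<union> (I - J)) + r (J \<inter> (I - J)) \<le> r J + r (I - J)"
    using polymatroidD(5)[OF P, of J "I - J"] I J by blast
  moreover have "J \<union> (I - J) = I" "J \<inter> (I - J) = {}" using J by auto
  moreover have "r (I - J) \<le> real (card (I - J))" using matroidD(3)[OF M, of "I - J"] I by blast
  moreover have "card I = card J + card (I - J)"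
    using card_Un_disjoint[of J "I - J"] fin J by (metis calculation(2) calculation(3) finite_Diff finite_subset)
  ultimately have "r J \<ge> real (card J)" using I(2) polymatroidD(2)[OF P] by simp
  moreover have "r J \<le> real (card J)" using matroidD(3)[OF M, of J] I J by blast
  ultimately show ?thesis by simp
qed

lemma basis_exists:
  assumes M: "matroid Y r" and A: "A \<subseteq> Y"
  shows "\<exists>B. B \<subseteq> A \<and> r B = real (card B) \<and> r B = r A"
proof -
  note P = matroidD(1)[OF M]
  have finA: "finite A" using polymatroidD(1)[OF P] A finite_subset by blast
  define S where "S = {B. B \<subseteq> A \<and> r B = real (card B)}"
  have "{} \<in> S" unfolding S_def using polymatroidD(2)[OF P] by simp
  have finS: "finite S" unfolding S_def using finA by simp
  define m where "m = Max (card ` S)"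
  have "m \<in> card ` S" unfolding m_def using finS \<open>{} \<in> S\<close> by (intro Max_in) auto
  then obtain B where B: "B \<in> S" "card B = m" by auto
  have maxB: "card B' \<le> card B" if "B' \<in> S" for B'
    using B(2) finS that unfolding m_def by simp
  have BA: "B \<subseteq> A" and Bi: "r B = real (card B)" using B(1) unfolding S_def by auto
  have finB: "finite B" using finA BA finite_subset by blast
  have step: "r (insert x B) = r B" if x: "x \<in> A" "x \<notin> B" for x
  proof -
    have ins: "insert x B \<subseteq> Y" using x BA A by blast
    have ge: "r B \<le> r (insert x B)" using polymatroidD(4)[OF P, of B "insert x B"] ins by blast
    have cardins: "card (insert x B) = card B + 1" using finB x by simp
    have le: "r (insert x B) \<le> real (card B) + 1" using matroidD(3)[OF M ins] cardins by simp
    have "r (insert x B) \<noteq> real (card B) + 1"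
    proof
      assume eq: "r (insert x B) = real (card B) + 1"
      then have "insert x B \<in> S" unfolding S_def using x BA cardins by simp
      then show False using maxB cardins by fastforce
    qed
    then have "r (insert x B) < real (card B) + 1" using le by simp
    then have "r (insert x B) = real (card B)"
      using int_squeeze[OF matroidD(2)[OF M ins]] ge Bi by simp
    then show ?thesis using Bi by simp
  qed
  have ind: "r (B \<union> T) = r B" if "finite T" "T \<subseteq> A - B" for T
    using that
  proof (induction T rule: finite_induct)
    case empty then show ?case by simp
  next
    case (insert x T)
    have sub1: "B \<union> T \<subseteq> Y" using insert BA A by blast
    have sub2: "insert x B \<subseteq> Y" using insert BA A by blast
    have "r ((B \<union> T) \<union> insert x B) + r ((B \<union> T) \<inter> insert x B) \<le> r (B \<union> T) + r (insert x B)"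
      using polymatroidD(5)[OF P sub1 sub2] .
    moreover have "(B \<union> T) \<union> insert x B = B \<union> insert x T" by auto
    moreover have "(B \<union> T) \<inter> insert x B = B" using insert by auto
    moreover have "r (B \<union> T) = r B" using insert by blast
    moreover have "r (insert x B) = r B" using step insert by blast
    ultimately have le: "r (B \<union> insert x T) \<le> r B" by simp
    have "r B \<le> r (B \<union> insert x T)" using polymatroidD(4)[OF P, of B "B \<union> insert x T"] sub1 sub2 by blast
    then show ?case using le by simp
  qed
  have "r (B \<union> (A - B)) = r B" using ind[of "A - B"] finA by simp
  moreover have "B \<union> (A - B) = A" using BA by auto
  ultimately show ?thesis using BA Bi by auto
qed

lemma circuit_facts:
  assumes M: "matroid Y r" and C: "circuit Y r C" and e: "e \<in> C"
  shows "r (C - {e}) = real (card (C - {e}))" "r C = r (C - {e})"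
proof -
  note P = matroidD(1)[OF M]
  have CY: "C \<subseteq> Y" and lt: "r C < real (card C)" and pr: "\<forall>D. D \<subset> C \<longrightarrow> r D = real (card D)"
    using C unfolding circuit_def by blast+
  have finC: "finite C" using polymatroidD(1)[OF P] CY finite_subset by blast
  have "C - {e} \<subset> C" using e by auto
  then show i: "r (C - {e}) = real (card (C - {e}))" using pr by blast
  have cc: "card (C - {e}) + 1 = card C" using finC e by (metis card_Suc_Diff1 Suc_eq_plus1)
  have "r (C - {e}) \<le> r C" using polymatroidD(4)[OF P, of "C - {e}" C] CY by blast
  moreover have "r C < real (card (C - {e})) + 1" using lt cc by (metis of_nat_add of_nat_1)
  ultimately have "r C = real (card (C - {e}))"
    using int_squeeze[OF matroidD(2)[OF M CY], of "card (C - {e})"] i by simp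
  then show "r C = r (C - {e})" using i by simp
qed



definition Pset :: "'e set \<Rightarrow> ('e set \<Rightarrow> real) \<Rightarrow> ('e set \<times> 'e set) set" where
  "Pset Y r = {p. fst p \<subseteq> Y \<and> snd p \<subseteq> fst p \<and> r (fst p) = r (snd p)}"

definition Iset :: "'e set \<Rightarrow> ('e set \<Rightarrow> real) \<Rightarrow> 'e set set" where
  "Iset Y r = {I. I \<subseteq> Y \<and> r I = real (card I)}"

definition Dfun :: "'e set \<Rightarrow> ('e set \<Rightarrow> real) \<Rightarrow> ('e set \<Rightarrow> real) \<Rightarrow> real" where
  "Dfun Y r h = (\<Sum>p\<in>Pset Y r. h (fst p) - h (snd p)) + (\<Sum>I\<in>Iset Y r. (\<Sum>e\<in>I. h {e}) - h I)"

lemma Pset_sub: "Pset Y r \<subseteq> Pow Y \<times> Pow Y"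
  unfolding Pset_def by auto

lemma finite_Pset: "finite Y \<Longrightarrow> finite (Pset Y r)"
  using Pset_sub finite_subset by (metis finite_Pow_iff finite_SigmaI)

lemma finite_Iset: "finite Y \<Longrightarrow> finite (Iset Y r)"
  unfolding Iset_def by simp

lemma Dfun_terms:
  assumes h: "pm Y h" and Y: "finite Y"
  shows "\<And>p. p \<in> Pset Y r \<Longrightarrow> 0 \<le> h (fst p) - h (snd p)"
    and "\<And>I. I \<in> Iset Y r \<Longrightarrow> 0 \<le> (\<Sum>e\<in>I. h {e}) - h I"
proof -
  fix p assume "p \<in> Pset Y r"
  then have "snd p \<subseteq> fst p" "fst p \<subseteq> Y" unfolding Pset_def by auto
  then show "0 \<le> h (fst p) - h (snd p)" using pmD(2)[OF h] by simp
next
  fix I assume "I \<in> Iset Y r"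
  then have "I \<subseteq> Y" unfolding Iset_def by auto
  then show "0 \<le> (\<Sum>e\<in>I. h {e}) - h I" using pm_subadd[OF h _ \<open>I \<subseteq> Y\<close>] Y finite_subset by fastforce
qed

lemma Dfun_geP:
  assumes h: "pm Y h" and Y: "finite Y" and p: "p \<in> Pset Y r"
  shows "h (fst p) - h (snd p) \<le> Dfun Y r h"
proof -
  have "h (fst p) - h (snd p) \<le> (\<Sum>p\<in>Pset Y r. h (fst p) - h (snd p))"
    using member_le_sum[of p "Pset Y r" "\<lambda>p. h (fst p) - h (snd p)"] p finite_Pset[OF Y] Dfun_terms(1)[OF h Y] by blast
  moreover have "0 \<le> (\<Sum>I\<in>Iset Y r. (\<Sum>e\<in>I. h {e}) - h I)"
    using Dfun_terms(2)[OF h Y] by (simp add: sum_nonneg)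
  ultimately show ?thesis unfolding Dfun_def by simp
qed

lemma Dfun_geI:
  assumes h: "pm Y h" and Y: "finite Y" and I: "I \<in> Iset Y r"
  shows "(\<Sum>e\<in>I. h {e}) - h I \<le> Dfun Y r h"
proof -
  have "(\<Sum>e\<in>I. h {e}) - h I \<le> (\<Sum>I\<in>Iset Y r. (\<Sum>e\<in>I. h {e}) - h I)"
    using member_le_sum[of I "Iset Y r" "\<lambda>I. (\<Sum>e\<in>I. h {e}) - h I"] I finite_Iset[OF Y] Dfun_terms(2)[OF h Y] by blast
  moreover have "0 \<le> (\<Sum>p\<in>Pset Y r. h (fst p) - h (snd p))"
    using Dfun_terms(1)[OF h Y] by (simp add: sum_nonneg)
  ultimately show ?thesis unfolding Dfun_def by simp
qed

lemma Dfun_nonneg: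
  assumes h: "pm Y h" and Y: "finite Y"
  shows "0 \<le> Dfun Y r h"
  unfolding Dfun_def using Dfun_terms[OF h Y] by (simp add: sum_nonneg add_nonneg_nonneg)

lemma Dfun_add: "Dfun Y r (\<lambda>A. u A + v A) = Dfun Y r u + Dfun Y r v"
proof -
  have 1: "(\<Sum>p\<in>Pset Y r. (u (fst p) + v (fst p)) - (u (snd p) + v (snd p))) =
     (\<Sum>p\<in>Pset Y r. u (fst p) - u (snd p)) + (\<Sum>p\<in>Pset Y r. v (fst p) - v (snd p))"
    unfolding sum.distrib[symmetric] by (rule sum.cong) auto
  have 2: "(\<Sum>I\<in>Iset Y r. (\<Sum>e\<in>I. u {e} + v {e}) - (u I + v I)) =
     (\<Sum>I\<in>Iset Y r. (\<Sum>e\<in>I. u {e}) - u I) + (\<Sum>I\<in>Iset Y r. (\<Sum>e\<in>I. v {e}) - v I)"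
    unfolding sum.distrib[symmetric] by (rule sum.cong) (auto simp: sum.distrib)
  show ?thesis unfolding Dfun_def using 1 2 by simp
qed

lemma Dfun_diff: "Dfun Y r (\<lambda>A. u A - v A) = Dfun Y r u - Dfun Y r v"
proof -
  have 1: "(\<Sum>p\<in>Pset Y r. (u (fst p) - v (fst p)) - (u (snd p) - v (snd p))) =
     (\<Sum>p\<in>Pset Y r. u (fst p) - u (snd p)) - (\<Sum>p\<in>Pset Y r. v (fst p) - v (snd p))"
    unfolding sum_subtractf[symmetric] by (rule sum.cong) auto
  have 2: "(\<Sum>I\<in>Iset Y r. (\<Sum>e\<in>I. u {e} - v {e}) - (u I - v I)) =
     (\<Sum>I\<in>Iset Y r. (\<Sum>e\<in>I. u {e}) - u I) - (\<Sum>I\<in>Iset Y r. (\<Sum>e\<in>I. v {e}) - v I)"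
    unfolding sum_subtractf[symmetric] by (rule sum.cong) (auto simp: sum_subtractf)
  show ?thesis unfolding Dfun_def using 1 2 by simp
qed

lemma Dfun_zero: "Dfun Y r (\<lambda>A. 0) = 0"
  unfolding Dfun_def by simp

lemma Dfun_sum:
  assumes "finite J"
  shows "Dfun Y r (\<lambda>A. \<Sum>j\<in>J. u j A) = (\<Sum>j\<in>J. Dfun Y r (u j))"
  using assms
proof (induction J rule: finite_induct)
  case empty then show ?case using Dfun_zero by simp
next
  case (insert x F)
  have "Dfun Y r (\<lambda>A. \<Sum>j\<in>insert x F. u j A) = Dfun Y r (\<lambda>A. u x A + (\<Sum>j\<in>F. u j A))"
    using insert by simp
  also have "\<dots> = Dfun Y r (u x) + Dfun Y r (\<lambda>A. \<Sum>j\<in>F. u j A)"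
    using Dfun_add[of Y r "u x"] by simp
  finally show ?case using insert by simp
qed

lemma Dfun_r:
  assumes M: "matroid Y r"
  shows "Dfun Y r r = 0"
proof -
  have "(\<Sum>p\<in>Pset Y r. r (fst p) - r (snd p)) = 0"
    by (rule sum.neutral) (auto simp: Pset_def)
  moreover have "(\<Sum>I\<in>Iset Y r. (\<Sum>e\<in>I. r {e}) - r I) = 0"
  proof (rule sum.neutral, rule ballI)
    fix I assume "I \<in> Iset Y r"
    then have I: "I \<subseteq> Y" "r I = real (card I)" unfolding Iset_def by auto
    have "r {e} = 1" if "e \<in> I" for e
      using indep_subset[OF M I, of "{e}"] that by simp
    then have "(\<Sum>e\<in>I. r {e}) = real (card I)" by simp
    then show "(\<Sum>e\<in>I. r {e}) - r I = 0" using I by simp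
  qed
  ultimately show ?thesis unfolding Dfun_def by simp
qed

definition Cst :: "'e set \<Rightarrow> ('e set \<Rightarrow> real) \<Rightarrow> real" where
  "Cst Y r = 2 * real (card (Pset Y r)) + real (card (Iset Y r)) * (real (card Y) + 1)"

lemma abs_le_norm:
  fixes u :: "'e set \<Rightarrow> real"
  assumes "finite Y" "A \<subseteq> Y"
  shows "\<bar>u A\<bar> \<le> (\<Sum>B\<in>Pow Y. \<bar>u B\<bar>)"
  using member_le_sum[of A "Pow Y" "\<lambda>B. \<bar>u B\<bar>"] assms by simp

lemma Dfun_bound:
  assumes Y: "finite Y"
  shows "Dfun Y r u \<le> Cst Y r * (\<Sum>B\<in>Pow Y. \<bar>u B\<bar>)"
proof -
  define N where "N = (\<Sum>B\<in>Pow Y. \<bar>u B\<bar>)"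
  have N0: "N \<ge> 0" unfolding N_def by (simp add: sum_nonneg)
  have t1: "u (fst p) - u (snd p) \<le> 2 * N" if "p \<in> Pset Y r" for p
  proof -
    have "fst p \<subseteq> Y" "snd p \<subseteq> Y" using that unfolding Pset_def by auto
    then have "\<bar>u (fst p)\<bar> \<le> N" "\<bar>u (snd p)\<bar> \<le> N" unfolding N_def using abs_le_norm[OF Y] by auto
    then show ?thesis by linarith
  qed
  have t2: "(\<Sum>e\<in>I. u {e}) - u I \<le> (real (card Y) + 1) * N" if "I \<in> Iset Y r" for I
  proof -
    have IY: "I \<subseteq> Y" using that unfolding Iset_def by auto
    have "\<bar>u I\<bar> \<le> N" unfolding N_def using abs_le_norm[OF Y IY] .
    moreover have "(\<Sum>e\<in>I. u {e}) \<le> (\<Sum>e\<in>I. N)"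
    proof (rule sum_mono)
      fix e assume "e \<in> I"
      then have "{e} \<subseteq> Y" using IY by auto
      then have "\<bar>u {e}\<bar> \<le> N" unfolding N_def by (rule abs_le_norm[OF Y])
      then show "u {e} \<le> N" by linarith
    qed
    moreover have "(\<Sum>e\<in>I. N) = real (card I) * N" by simp
    moreover have "real (card I) \<le> real (card Y)" using card_mono[OF Y IY] by simp
    moreover have "real (card I) * N \<le> real (card Y) * N" using calculation(4) N0 by (rule mult_right_mono)
    ultimately have "(\<Sum>e\<in>I. u {e}) - u I \<le> real (card Y) * N + N" by linarith
    then show ?thesis by (simp add: distrib_right)
  qed
  have "(\<Sum>p\<in>Pset Y r. u (fst p) - u (snd p)) \<le> (\<Sum>p\<in>Pset Y r. 2 * N)"
    using t1 by (rule sum_mono)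
  moreover have "(\<Sum>I\<in>Iset Y r. (\<Sum>e\<in>I. u {e}) - u I) \<le> (\<Sum>I\<in>Iset Y r. (real (card Y) + 1) * N)"
    using t2 by (rule sum_mono)
  ultimately have "Dfun Y r u \<le> real (card (Pset Y r)) * (2 * N) + real (card (Iset Y r)) * ((real (card Y) + 1) * N)"
    unfolding Dfun_def by simp
  also have "\<dots> = Cst Y r * N" unfolding Cst_def by (simp add: algebra_simps)
  finally show ?thesis unfolding N_def .
qed



lemma single_bound:
  assumes CM: "connected_matroid Y r" and e0: "e0 \<in> Y" and h: "pm Y h" and A: "A \<subseteq> Y"
  shows "\<bar>h A - h {e0} * r A\<bar> \<le> (2 + 2 * real (card Y)) * Dfun Y r h"
proof -
  have M: "matroid Y r" using CM unfolding connected_matroid_def by blast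
  note P = matroidD(1)[OF M]
  have finY: "finite Y" using polymatroidD(1)[OF P] .
  define d where "d = Dfun Y r h"
  have d0: "d \<ge> 0" unfolding d_def using Dfun_nonneg[OF h finY] .
  have step1: "\<bar>h {e} - h {e0}\<bar> \<le> 2 * d" if eY: "e \<in> Y" for e
  proof (cases "e = e0")
    case True then show ?thesis using d0 by simp
  next
    case False
    then obtain C where C: "circuit Y r C" "e \<in> C" "e0 \<in> C"
      using CM eY e0 unfolding connected_matroid_def by blast
    have CY: "C \<subseteq> Y" using C(1) unfolding circuit_def by blast
    have finC: "finite C" using finY CY finite_subset by blast
    define S where "S = (\<Sum>f\<in>C. h {f})"
    have claim: "\<bar>h {x} - (S - h C)\<bar> \<le> d" if x: "x \<in> C" for x
    proof -
      have i: "C - {x} \<in> Iset Y r" unfolding Iset_def using circuit_facts(1)[OF M C(1) x] CY by auto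
      have p: "(C, C - {x}) \<in> Pset Y r" unfolding Pset_def using circuit_facts(2)[OF M C(1) x] CY by auto
      have a1: "0 \<le> (\<Sum>f\<in>C - {x}. h {f}) - h (C - {x})" using Dfun_terms(2)[OF h finY i] .
      have a2: "(\<Sum>f\<in>C - {x}. h {f}) - h (C - {x}) \<le> d" unfolding d_def using Dfun_geI[OF h finY i] .
      have b1: "0 \<le> h C - h (C - {x})" using Dfun_terms(1)[OF h finY p] by simp
      have b2: "h C - h (C - {x}) \<le> d" unfolding d_def using Dfun_geP[OF h finY p] by simp
      have "S = h {x} + (\<Sum>f\<in>C - {x}. h {f})" unfolding S_def using sum.remove[OF finC x] .
      then show ?thesis using a1 a2 b1 b2 by linarith
    qed
    show ?thesis using claim[OF C(2)] claim[OF C(3)] by linarith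
  qed
  obtain B where B: "B \<subseteq> A" "r B = real (card B)" "r B = r A" using basis_exists[OF M A] by blast
  have BY: "B \<subseteq> Y" using B A by blast
  have finB: "finite B" using finY BY finite_subset by blast
  have i: "B \<in> Iset Y r" unfolding Iset_def using B BY by auto
  have p: "(A, B) \<in> Pset Y r" unfolding Pset_def using B A by auto
  have a1: "0 \<le> (\<Sum>f\<in>B. h {f}) - h B" using Dfun_terms(2)[OF h finY i] .
  have a2: "(\<Sum>f\<in>B. h {f}) - h B \<le> d" unfolding d_def using Dfun_geI[OF h finY i] .
  have b1: "0 \<le> h A - h B" using Dfun_terms(1)[OF h finY p] by simp
  have b2: "h A - h B \<le> d" unfolding d_def using Dfun_geP[OF h finY p] by simp
  have "\<bar>(\<Sum>f\<in>B. h {f}) - real (card B) * h {e0}\<bar> = \<bar>\<Sum>f\<in>B. (h {f} - h {e0})\<bar>"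
    by (simp add: sum_subtractf)
  also have "\<dots> \<le> (\<Sum>f\<in>B. \<bar>h {f} - h {e0}\<bar>)" by (rule sum_abs)
  also have "\<dots> \<le> (\<Sum>f\<in>B. 2 * d)" using step1 BY by (intro sum_mono) blast
  also have "\<dots> = real (card B) * (2 * d)" by simp
  also have "\<dots> \<le> real (card Y) * (2 * d)"
    using card_mono[OF finY BY] d0 by (intro mult_right_mono) simp_all
  finally have c: "\<bar>(\<Sum>f\<in>B. h {f}) - real (card B) * h {e0}\<bar> \<le> real (card Y) * (2 * d)" .
  have rA: "r A = real (card B)" using B by simp
  have "\<bar>h A - h {e0} * r A\<bar> \<le> d + d + real (card Y) * (2 * d)"
    using a1 a2 b1 b2 c rA by (simp add: mult.commute)
  also have "\<dots> = (2 + 2 * real (card Y)) * d" by (simp add: algebra_simps)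
  finally show ?thesis unfolding d_def .
qed

lemma sum_extremal:
  assumes CM: "connected_matroid Y r" and e0: "e0 \<in> Y"
  shows "\<exists>K\<ge>0. \<forall>(J::nat set) h. finite J \<longrightarrow> (\<forall>j\<in>J. pm Y (h j)) \<longrightarrow>
     (\<Sum>j\<in>J. \<Sum>A\<in>Pow Y. \<bar>h j A - h j {e0} * r A\<bar>) \<le> K * (\<Sum>A\<in>Pow Y. \<bar>(\<Sum>j\<in>J. h j A) - r A\<bar>)"
proof -
  have M: "matroid Y r" using CM unfolding connected_matroid_def by blast
  have finY: "finite Y" using polymatroidD(1)[OF matroidD(1)[OF M]] .
  define k where "k = real (card (Pow Y)) * (2 + 2 * real (card Y))"
  have k0: "k \<ge> 0" unfolding k_def by simp
  have C0: "Cst Y r \<ge> 0" unfolding Cst_def by simp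
  show ?thesis
  proof (intro exI[where x="k * Cst Y r"] conjI allI impI)
    show "0 \<le> k * Cst Y r" using k0 C0 by simp
    fix J :: "nat set" and h
    assume J: "finite J" and hj: "\<forall>j\<in>J. pm Y (h j)"
    have each: "(\<Sum>A\<in>Pow Y. \<bar>h j A - h j {e0} * r A\<bar>) \<le> k * Dfun Y r (h j)" if j: "j \<in> J" for j
    proof -
      have "(\<Sum>A\<in>Pow Y. \<bar>h j A - h j {e0} * r A\<bar>) \<le> (\<Sum>A\<in>Pow Y. (2 + 2 * real (card Y)) * Dfun Y r (h j))"
        using single_bound[OF CM e0] hj j by (intro sum_mono) simp
      also have "\<dots> = k * Dfun Y r (h j)" unfolding k_def by simp
      finally show ?thesis .
    qed
    define S where "S = (\<lambda>A. \<Sum>j\<in>J. h j A)"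
    have "(\<Sum>j\<in>J. \<Sum>A\<in>Pow Y. \<bar>h j A - h j {e0} * r A\<bar>) \<le> (\<Sum>j\<in>J. k * Dfun Y r (h j))"
      using each by (rule sum_mono)
    also have "\<dots> = k * Dfun Y r S" unfolding S_def using Dfun_sum[OF J, of Y r h]
      by (simp add: sum_distrib_left)
    also have "Dfun Y r S = Dfun Y r (\<lambda>A. S A - r A)" using Dfun_diff[of Y r S r] Dfun_r[OF M] by simp
    also have "k * \<dots> \<le> k * (Cst Y r * (\<Sum>A\<in>Pow Y. \<bar>S A - r A\<bar>))"
      using Dfun_bound[OF finY, of r "\<lambda>A. S A - r A"] k0 by (intro mult_left_mono) simp_all
    finally show "(\<Sum>j\<in>J. \<Sum>A\<in>Pow Y. \<bar>h j A - h j {e0} * r A\<bar>) \<le> k * Cst Y r * (\<Sum>A\<in>Pow Y. \<bar>(\<Sum>j\<in>J. h j A) - r A\<bar>)"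
      unfolding S_def by (simp add: mult.assoc)
  qed
qed



lemma avg_pick:
  fixes e t :: "nat \<Rightarrow> real"
  assumes J: "finite J" and e0: "\<And>j. j \<in> J \<Longrightarrow> 0 \<le> e j" and t0: "\<And>j. j \<in> J \<Longrightarrow> 0 \<le> t j"
    and le: "(\<Sum>j\<in>J. e j) \<le> M * (\<Sum>j\<in>J. t j)" and pos: "(\<Sum>j\<in>J. t j) > 0"
  shows "\<exists>j\<in>J. t j > 0 \<and> e j \<le> M * t j"
proof (rule ccontr)
  assume H: "\<not> ?thesis"
  have ge: "M * t j \<le> e j" if "j \<in> J" for j
  proof (cases "t j > 0")
    case True
    have "\<not> (t j > 0 \<and> e j \<le> M * t j)" using H that by blast
    then show ?thesis using True by linarith
  next
    case False then have "t j = 0" using t0[OF that] by simp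
    then show ?thesis using e0[OF that] by simp
  qed
  have "\<exists>j\<in>J. t j \<noteq> 0"
  proof (rule ccontr)
    assume "\<not> (\<exists>j\<in>J. t j \<noteq> 0)"
    then have "(\<Sum>j\<in>J. t j) = 0" by simp
    then show False using pos by simp
  qed
  then obtain j0 where j0: "j0 \<in> J" "t j0 \<noteq> 0" by blast
  then have tp: "t j0 > 0" using t0[of j0] by linarith
  have "\<not> (t j0 > 0 \<and> e j0 \<le> M * t j0)" using H j0 by blast
  then have gt: "M * t j0 < e j0" using tp by linarith
  have "(\<Sum>j\<in>J. M * t j) < (\<Sum>j\<in>J. e j)"
  proof (rule sum_strict_mono_ex1[OF J])
    show "\<forall>x\<in>J. M * t x \<le> e x" using ge by blast
    show "\<exists>a\<in>J. M * t a < e a" using j0(1) gt by blast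
  qed
  moreover have "(\<Sum>j\<in>J. M * t j) = M * (\<Sum>j\<in>J. t j)" by (rule sum_distrib_left[symmetric])
  ultimately show False using le by linarith
qed

lemma lim_reindex:
  fixes N :: "nat \<Rightarrow> real"
  assumes "N \<longlonglongrightarrow> 0" "\<And>k. idx k \<ge> k"
  shows "(\<lambda>k. N (idx k)) \<longlonglongrightarrow> 0"
proof (rule LIMSEQ_I)
  fix r :: real assume "r > 0"
  then obtain no where no: "\<forall>n\<ge>no. norm (N n - 0) < r" using assms(1) LIMSEQ_iff by blast
  show "\<exists>no. \<forall>n\<ge>no. norm (N (idx n) - 0) < r"
  proof (intro exI allI impI)
    fix n assume "no \<le> n"
    then have "no \<le> idx n" using assms(2)[of n] by linarith
    then show "norm (N (idx n) - 0) < r" using no by blast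
  qed
qed

lemma lim_bound:
  fixes x b :: "nat \<Rightarrow> real"
  assumes "\<And>k. \<bar>x k - L\<bar> \<le> b k" "b \<longlonglongrightarrow> 0"
  shows "x \<longlonglongrightarrow> L"
proof (rule LIMSEQ_I)
  fix r :: real assume "r > 0"
  then obtain no where no: "\<forall>n\<ge>no. norm (b n - 0) < r" using assms(2) LIMSEQ_iff by blast
  show "\<exists>no. \<forall>n\<ge>no. norm (x n - L) < r"
  proof (intro exI allI impI)
    fix n assume "no \<le> n"
    then have "\<bar>b n\<bar> < r" using no by simp
    then show "norm (x n - L) < r" using assms(1)[of n] by simp
  qed
qed

lemma not_tendsto_zero:
  fixes T :: "nat \<Rightarrow> real"
  assumes "\<not> T \<longlonglongrightarrow> 0" "\<And>i. T i \<ge> 0"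
  shows "\<exists>\<eta>>0. \<forall>k. \<exists>i\<ge>k. T i \<ge> \<eta>"
proof -
  from assms(1) obtain r :: real where r: "r > 0" "\<forall>no. \<exists>n\<ge>no. \<not> norm (T n - 0) < r"
    unfolding LIMSEQ_iff by blast
  have "\<forall>k. \<exists>i\<ge>k. T i \<ge> r"
  proof
    fix k obtain n where "n \<ge> k" "\<not> norm (T n - 0) < r" using r(2) by blast
    then show "\<exists>i\<ge>k. T i \<ge> r" using assms(2)[of n] by (intro exI[where x=n]) simp
  qed
  then show ?thesis using r(1) by blast
qed



lemma class_mass_vanishes:
  fixes Y X :: "'e set" and r :: "'e set \<Rightarrow> real" and n :: "nat \<Rightarrow> nat"
    and c :: "nat \<Rightarrow> nat \<Rightarrow> real" and g :: "nat \<Rightarrow> nat \<Rightarrow> 'e set \<Rightarrow> real"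
    and Sel :: "nat \<Rightarrow> nat \<Rightarrow> bool" and Q :: "'e set \<Rightarrow> ('e set \<Rightarrow> real) \<Rightarrow> bool"
  assumes CM: "connected_matroid Y r" and rY: "r Y > 0" and YX: "Y \<subseteq> X"
    and terms: "\<And>i j. j < n i \<Longrightarrow> c i j \<ge> 0 \<and> polymatroid X (g i j)"
    and sel: "\<And>i j. j < n i \<Longrightarrow> Sel i j \<Longrightarrow> Q Y (g i j)"
    and conv: "\<And>A. A \<subseteq> Y \<Longrightarrow> (\<lambda>i. \<Sum>j<n i. c i j * g i j A) \<longlonglongrightarrow> r A"
    and notal: "\<not> (\<exists>(g' :: nat \<Rightarrow> 'e set \<Rightarrow> real) (c' :: nat \<Rightarrow> real).
        (\<forall>k. Q Y (g' k) \<and> 0 < c' k) \<and> (\<forall>A. A \<subseteq> Y \<longrightarrow> (\<lambda>k. c' k * g' k A) \<longlonglongrightarrow> r A))"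
  shows "(\<lambda>i. \<Sum>j\<in>{j. j < n i \<and> Sel i j}. c i j * g i j Y) \<longlonglongrightarrow> 0"
proof -
  have M: "matroid Y r" using CM unfolding connected_matroid_def by blast
  note P = matroidD(1)[OF M]
  have finY: "finite Y" using polymatroidD(1)[OF P] .
  have "Y \<noteq> {}" using rY polymatroidD(2)[OF P] by auto
  then obtain e0 where e0: "e0 \<in> Y" by blast
  define h where "h = (\<lambda>i j A. c i j * g i j A)"
  have pmh: "pm Y (h i j)" if "j < n i" for i j
    unfolding h_def using pm_scale_restrict[of X "g i j" Y "c i j"] terms[OF that] YX by blast
  obtain K where K0: "K \<ge> 0" and K: "\<And>(J::nat set) hh. finite J \<Longrightarrow> (\<forall>j\<in>J. pm Y (hh j)) \<Longrightarrow>
     (\<Sum>j\<in>J. \<Sum>A\<in>Pow Y. \<bar>hh j A - hh j {e0} * r A\<bar>) \<le> K * (\<Sum>A\<in>Pow Y. \<bar>(\<Sum>j\<in>J. hh j A) - r A\<bar>)"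
    using sum_extremal[OF CM e0] by blast
  define N where "N = (\<lambda>i. \<Sum>A\<in>Pow Y. \<bar>(\<Sum>j<n i. h i j A) - r A\<bar>)"
  have Nlim: "N \<longlonglongrightarrow> 0"
    unfolding N_def
  proof (rule tendsto_null_sum)
    fix A assume "A \<in> Pow Y"
    then have "(\<lambda>i. \<Sum>j<n i. h i j A) \<longlonglongrightarrow> r A" unfolding h_def using conv by blast
    then have "(\<lambda>i. \<bar>(\<Sum>j<n i. h i j A) - r A\<bar>) \<longlonglongrightarrow> \<bar>r A - r A\<bar>"
      by (intro tendsto_rabs tendsto_diff tendsto_const)
    then show "(\<lambda>i. \<bar>(\<Sum>j<n i. h i j A) - r A\<bar>) \<longlonglongrightarrow> 0" by simp
  qed
  have N0: "N i \<ge> 0" for i unfolding N_def by (simp add: sum_nonneg)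
  define E where "E = (\<lambda>i j. \<Sum>A\<in>Pow Y. \<bar>h i j A - h i j {e0} * r A\<bar>)"
  have E0: "E i j \<ge> 0" for i j unfolding E_def by (simp add: sum_nonneg)
  have Ebound: "(\<Sum>j<n i. E i j) \<le> K * N i" for i
    unfolding E_def N_def using K[of "{..<n i}" "h i"] pmh by simp
  define SS where "SS = (\<lambda>i. {j. j < n i \<and> Sel i j})"
  have SSsub: "SS i \<subseteq> {..<n i}" for i unfolding SS_def by auto
  have finSS: "finite (SS i)" for i using SSsub finite_subset by blast
  have ESel: "(\<Sum>j\<in>SS i. E i j) \<le> K * N i" for i
  proof -
    have "(\<Sum>j\<in>SS i. E i j) \<le> (\<Sum>j<n i. E i j)"
      using sum_mono2[of "{..<n i}" "SS i" "E i"] SSsub E0 by simp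
    then show ?thesis using Ebound[of i] by linarith
  qed
  define T where "T = (\<lambda>i. \<Sum>j\<in>SS i. h i j {e0})"
  have t0: "h i j {e0} \<ge> 0" if "j \<in> SS i" for i j
    using pm_nonneg[OF pmh, of j i "{e0}"] that e0 unfolding SS_def by auto
  have T0: "T i \<ge> 0" for i unfolding T_def using t0 by (simp add: sum_nonneg)
  have Tlim: "T \<longlonglongrightarrow> 0"
  proof (rule ccontr)
    assume "\<not> T \<longlonglongrightarrow> 0"
    then obtain \<eta> :: real where eta: "\<eta> > 0" "\<forall>k. \<exists>i\<ge>k. T i \<ge> \<eta>"
      using not_tendsto_zero T0 by blast
    then obtain idx where idx: "\<And>k. idx k \<ge> k" "\<And>k. T (idx k) \<ge> \<eta>" by metis
    have pick: "\<exists>j\<in>SS (idx k). h (idx k) j {e0} > 0 \<and> E (idx k) j \<le> (K * N (idx k) / \<eta>) * h (idx k) j {e0}" for k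
    proof (rule avg_pick[OF finSS])
      show "\<And>j. j \<in> SS (idx k) \<Longrightarrow> 0 \<le> E (idx k) j" using E0 by blast
      show "\<And>j. j \<in> SS (idx k) \<Longrightarrow> 0 \<le> h (idx k) j {e0}" using t0 by blast
      show "(\<Sum>j\<in>SS (idx k). h (idx k) j {e0}) > 0" using idx(2)[of k] eta(1) unfolding T_def by linarith
      have KN: "K * N (idx k) \<ge> 0" using K0 N0 by simp
      have "K * N (idx k) = (K * N (idx k) / \<eta>) * \<eta>" using eta(1) by simp
      also have "\<dots> \<le> (K * N (idx k) / \<eta>) * T (idx k)"
        using idx(2)[of k] KN eta(1) by (intro mult_left_mono) simp_all
      finally show "(\<Sum>j\<in>SS (idx k). E (idx k) j) \<le> (K * N (idx k) / \<eta>) * (\<Sum>j\<in>SS (idx k). h (idx k) j {e0})"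
        using ESel[of "idx k"] unfolding T_def by linarith
    qed
    then obtain jj where jj: "\<And>k. jj k \<in> SS (idx k)" "\<And>k. h (idx k) (jj k) {e0} > 0"
      "\<And>k. E (idx k) (jj k) \<le> (K * N (idx k) / \<eta>) * h (idx k) (jj k) {e0}"
      by metis
    define g' where "g' = (\<lambda>k. g (idx k) (jj k))"
    define c' where "c' = (\<lambda>k. 1 / g (idx k) (jj k) {e0})"
    have jjn: "jj k < n (idx k)" and jjs: "Sel (idx k) (jj k)" for k using jj(1)[of k] unfolding SS_def by auto
    have cpos: "c (idx k) (jj k) > 0" and gpos: "g (idx k) (jj k) {e0} > 0" for k
    proof -
      have "c (idx k) (jj k) * g (idx k) (jj k) {e0} > 0" using jj(2)[of k] unfolding h_def by simp
      moreover have "c (idx k) (jj k) \<ge> 0" using terms[OF jjn] by blast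
      ultimately show "c (idx k) (jj k) > 0" "g (idx k) (jj k) {e0} > 0"
        by (auto simp: zero_less_mult_iff)
    qed
    have Qk: "\<forall>k. Q Y (g' k) \<and> 0 < c' k"
      unfolding g'_def c'_def using sel[OF jjn jjs] gpos by simp
    have convk: "\<forall>A. A \<subseteq> Y \<longrightarrow> (\<lambda>k. c' k * g' k A) \<longlonglongrightarrow> r A"
    proof (intro allI impI)
      fix A assume AY: "A \<subseteq> Y"
      have bnd: "\<bar>c' k * g' k A - r A\<bar> \<le> K * N (idx k) / \<eta>" for k
      proof -
        let ?a = "c (idx k) (jj k)" and ?b = "g (idx k) (jj k) {e0}" and ?gA = "g (idx k) (jj k) A"
        have tpos: "?a * ?b > 0" using cpos[of k] gpos[of k] by simp
        have "\<bar>h (idx k) (jj k) A - h (idx k) (jj k) {e0} * r A\<bar> \<le> E (idx k) (jj k)"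
          unfolding E_def using member_le_sum[of A "Pow Y" "\<lambda>A. \<bar>h (idx k) (jj k) A - h (idx k) (jj k) {e0} * r A\<bar>"] AY finY
          by simp
        also have "\<dots> \<le> (K * N (idx k) / \<eta>) * (?a * ?b)" using jj(3)[of k] unfolding h_def by simp
        finally have L: "\<bar>?a * ?gA - ?a * ?b * r A\<bar> \<le> (K * N (idx k) / \<eta>) * (?a * ?b)"
          unfolding h_def by simp
        have "?a * ?gA - ?a * ?b * r A = (?a * ?b) * (?gA / ?b - r A)"
          using gpos[of k] by (simp add: field_simps)
        then have "\<bar>?a * ?gA - ?a * ?b * r A\<bar> = \<bar>?a * ?b\<bar> * \<bar>?gA / ?b - r A\<bar>"
          by (metis abs_mult)
        then have "\<bar>?a * ?gA - ?a * ?b * r A\<bar> = (?a * ?b) * \<bar>?gA / ?b - r A\<bar>"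
          using abs_of_pos[OF tpos] by simp
        then have "(?a * ?b) * \<bar>?gA / ?b - r A\<bar> \<le> (?a * ?b) * (K * N (idx k) / \<eta>)"
          using L by (simp add: mult.commute)
        then have "\<bar>?gA / ?b - r A\<bar> \<le> K * N (idx k) / \<eta>"
          using mult_le_cancel_left_pos[OF tpos, of "\<bar>?gA / ?b - r A\<bar>" "K * N (idx k) / \<eta>"] by blast
        then show ?thesis unfolding c'_def g'_def by simp
      qed
      have "(\<lambda>k. K * N (idx k) / \<eta>) \<longlonglongrightarrow> K * 0 / \<eta>"
        using lim_reindex[OF Nlim idx(1)] by (intro tendsto_divide tendsto_mult tendsto_const) (use eta in auto)
      then have "(\<lambda>k. K * N (idx k) / \<eta>) \<longlonglongrightarrow> 0" by simp
      then show "(\<lambda>k. c' k * g' k A) \<longlonglongrightarrow> r A" using lim_bound[of "\<lambda>k. c' k * g' k A" "r A" "\<lambda>k. K * N (idx k) / \<eta>"] bnd by blast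
    qed
    show False using notal Qk convk by blast
  qed
  define Ms where "Ms = (\<lambda>i. \<Sum>j\<in>SS i. h i j Y)"
  have Ms0: "Ms i \<ge> 0" for i
    unfolding Ms_def using pm_nonneg[OF pmh] SSsub by (intro sum_nonneg) (auto simp: SS_def)
  have Msle: "Ms i \<le> T i * r Y + K * N i" for i
  proof -
    have "h i j Y \<le> h i j {e0} * r Y + E i j" if "j \<in> SS i" for j
    proof -
      have "\<bar>h i j Y - h i j {e0} * r Y\<bar> \<le> E i j"
        unfolding E_def using member_le_sum[of Y "Pow Y" "\<lambda>A. \<bar>h i j A - h i j {e0} * r A\<bar>"] finY
        by simp
      then show ?thesis by linarith
    qed
    then have "Ms i \<le> (\<Sum>j\<in>SS i. h i j {e0} * r Y + E i j)" unfolding Ms_def by (rule sum_mono)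
    also have "\<dots> = T i * r Y + (\<Sum>j\<in>SS i. E i j)" unfolding T_def by (simp add: sum.distrib sum_distrib_right)
    finally show ?thesis using ESel[of i] by linarith
  qed
  have "(\<lambda>i. T i * r Y + K * N i) \<longlonglongrightarrow> 0 * r Y + K * 0"
    by (intro tendsto_add tendsto_mult Tlim Nlim tendsto_const)
  then have up: "(\<lambda>i. T i * r Y + K * N i) \<longlonglongrightarrow> 0" by simp
  have "Ms \<longlonglongrightarrow> 0"
    by (rule tendsto_sandwich[OF _ _ tendsto_const up]) (use Ms0 Msle in auto)
  then show ?thesis unfolding Ms_def SS_def h_def .
qed



lemma sum_split_pred:
  fixes F :: "nat \<Rightarrow> real"
  shows "(\<Sum>j<n. F j) = (\<Sum>j\<in>{j. j < n \<and> P j}. F j) + (\<Sum>j\<in>{j. j < n \<and> \<not> P j}. F j)"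
proof -
  have "{..<n} = {j. j < n \<and> P j} \<union> {j. j < n \<and> \<not> P j}" by auto
  moreover have "{j. j < n \<and> P j} \<inter> {j. j < n \<and> \<not> P j} = {}" by auto
  ultimately show ?thesis using sum.union_disjoint[of "{j. j < n \<and> P j}" "{j. j < n \<and> \<not> P j}" F] by simp
qed

theorem theorem5:
  fixes X1 X2 :: "'e set" and \<Phi>1 \<Phi>2 :: "'e set \<Rightarrow> real" and \<epsilon> :: real
  assumes "connected_matroid X1 \<Phi>1"
    and "even_representable X1 \<Phi>1"
    and "\<not> almost_odd_representable X1 \<Phi>1"
    and "connected_matroid X2 \<Phi>2"
    and "odd_representable X2 \<Phi>2"
    and "\<not> almost_even_representable X2 \<Phi>2"
    and "X1 \<inter> X2 = {}"
    and "0 < \<epsilon>" and "\<epsilon> \<le> min (\<Phi>1 X1) (\<Phi>2 X2)"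
  shows "let X = X1 \<union> X2;
             \<Phi> = (\<lambda>A. \<Phi>1 (A \<inter> X1) + \<Phi>2 (A \<inter> X2));
             \<Phi>\<epsilon> = (\<lambda>A. min (\<Phi> A) (\<Phi> X - \<epsilon>))
         in \<not> cc_representable X \<Phi>\<epsilon>"
proof -
  define X where "X = X1 \<union> X2"
  define \<Phi> where "\<Phi> = (\<lambda>A. \<Phi>1 (A \<inter> X1) + \<Phi>2 (A \<inter> X2))"
  define \<Phi>e where "\<Phi>e = (\<lambda>A. min (\<Phi> A) (\<Phi> X - \<epsilon>))"
  have M1: "matroid X1 \<Phi>1" using assms(1) unfolding connected_matroid_def by blast
  have M2: "matroid X2 \<Phi>2" using assms(4) unfolding connected_matroid_def by blast
  note P1 = matroidD(1)[OF M1] and P2 = matroidD(1)[OF M2]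
  have e1: "\<epsilon> \<le> \<Phi>1 X1" and e2: "\<epsilon> \<le> \<Phi>2 X2" using assms(9) by auto
  have PhiX: "\<Phi> X = \<Phi>1 X1 + \<Phi>2 X2" unfolding \<Phi>_def X_def
    by (simp add: Int_absorb1 Int_absorb2 Un_Int_distrib2 Int_commute)
  have PhiX': "\<Phi> X = \<Phi>1 X1 + \<Phi>2 X2" using PhiX .
  have on1: "\<Phi>e A = \<Phi>1 A" if "A \<subseteq> X1" for A
  proof -
    have "A \<inter> X1 = A" "A \<inter> X2 = {}" using that assms(7) by auto
    then have "\<Phi> A = \<Phi>1 A" unfolding \<Phi>_def using polymatroidD(2)[OF P2] by simp
    moreover have "\<Phi>1 A \<le> \<Phi>1 X1" using polymatroidD(4)[OF P1 that] by simp
    ultimately show ?thesis unfolding \<Phi>e_def using PhiX e2 by simp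
  qed
  have on2: "\<Phi>e A = \<Phi>2 A" if "A \<subseteq> X2" for A
  proof -
    have "A \<inter> X2 = A" "A \<inter> X1 = {}" using that assms(7) by auto
    then have "\<Phi> A = \<Phi>2 A" unfolding \<Phi>_def using polymatroidD(2)[OF P1] by simp
    moreover have "\<Phi>2 A \<le> \<Phi>2 X2" using polymatroidD(4)[OF P2 that] by simp
    ultimately show ?thesis unfolding \<Phi>e_def using PhiX e1 by simp
  qed
  have onX: "\<Phi>e X = \<Phi> X - \<epsilon>" unfolding \<Phi>e_def using assms(8) by simp
  have "\<not> cc_representable X \<Phi>e"
  proof
    assume "cc_representable X \<Phi>e"
    then obtain f :: "nat \<Rightarrow> 'e set \<Rightarrow> real" where f: "\<And>i. f i \<in> rep_cone X"
      and flim: "\<And>A. A \<subseteq> X \<Longrightarrow> (\<lambda>i. f i A) \<longlonglongrightarrow> \<Phi>e A"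
      unfolding cc_representable_def by blast
    have "\<forall>i. \<exists>(n::nat) (c :: nat \<Rightarrow> real) (g :: nat \<Rightarrow> 'e set \<Rightarrow> real).
       (\<forall>j<n. c j \<ge> 0 \<and> representable X (g j)) \<and>
       (\<forall>A. A \<subseteq> X \<longrightarrow> f i A = (\<Sum>j<n. c j * g j A))"
      using f unfolding rep_cone_def by blast
    then obtain n :: "nat \<Rightarrow> nat" and c :: "nat \<Rightarrow> nat \<Rightarrow> real" and g :: "nat \<Rightarrow> nat \<Rightarrow> 'e set \<Rightarrow> real"
      where cg: "\<And>i j. j < n i \<Longrightarrow> c i j \<ge> 0 \<and> representable X (g i j)"
      and fsum: "\<And>i A. A \<subseteq> X \<Longrightarrow> f i A = (\<Sum>j<n i. c i j * g i j A)"
      by metis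
    have terms: "\<And>i j. j < n i \<Longrightarrow> c i j \<ge> 0 \<and> polymatroid X (g i j)"
      using cg representable_polymatroid by blast
    have X1X: "X1 \<subseteq> X" and X2X: "X2 \<subseteq> X" unfolding X_def by auto
    have conv1: "(\<lambda>i. \<Sum>j<n i. c i j * g i j A) \<longlonglongrightarrow> \<Phi>1 A" if "A \<subseteq> X1" for A
    proof -
      have "A \<subseteq> X" using that X1X by blast
      then have "(\<lambda>i. \<Sum>j<n i. c i j * g i j A) = (\<lambda>i. f i A)" using fsum by simp
      then show ?thesis using flim[OF \<open>A \<subseteq> X\<close>] on1[OF that] by simp
    qed
    have conv2: "(\<lambda>i. \<Sum>j<n i. c i j * g i j A) \<longlonglongrightarrow> \<Phi>2 A" if "A \<subseteq> X2" for A
    proof -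
      have "A \<subseteq> X" using that X2X by blast
      then have "(\<lambda>i. \<Sum>j<n i. c i j * g i j A) = (\<lambda>i. f i A)" using fsum by simp
      then show ?thesis using flim[OF \<open>A \<subseteq> X\<close>] on2[OF that] by simp
    qed
    have sel1: "odd_representable X1 (g i j)" if "j < n i" "\<not> even_representable X (g i j)" for i j
    proof -
      have "odd_representable X (g i j)" using rep_even_or_odd[of X "g i j"] cg[OF that(1)] that(2) by blast
      then show ?thesis using odd_rep_restrict X1X by blast
    qed
    have sel2: "even_representable X2 (g i j)" if "j < n i" "even_representable X (g i j)" for i j
      using even_rep_restrict that(2) X2X by blast
    have r1: "\<Phi>1 X1 > 0" using e1 assms(8) by linarith
    have r2: "\<Phi>2 X2 > 0" using e2 assms(8) by linarith
    have alim: "(\<lambda>i. \<Sum>j\<in>{j. j < n i \<and> \<not> even_representable X (g i j)}. c i j * g i j X1) \<longlonglongrightarrow> 0"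
      using class_mass_vanishes[of X1 \<Phi>1 X n c g "\<lambda>i j. \<not> even_representable X (g i j)" odd_representable,
          OF assms(1) r1 X1X terms sel1 conv1] assms(3) unfolding almost_odd_representable_def by blast
    have blim: "(\<lambda>i. \<Sum>j\<in>{j. j < n i \<and> even_representable X (g i j)}. c i j * g i j X2) \<longlonglongrightarrow> 0"
      using class_mass_vanishes[of X2 \<Phi>2 X n c g "\<lambda>i j. even_representable X (g i j)" even_representable,
          OF assms(4) r2 X2X terms sel2 conv2] assms(6) unfolding almost_even_representable_def by blast
    define Ev where "Ev = (\<lambda>i. {j. j < n i \<and> even_representable X (g i j)})"
    define Od where "Od = (\<lambda>i. {j. j < n i \<and> \<not> even_representable X (g i j)})"
    define a where "a = (\<lambda>i. \<Sum>j\<in>Od i. c i j * g i j X1)"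
    define b where "b = (\<lambda>i. \<Sum>j\<in>Ev i. c i j * g i j X2)"
    have ineq: "f i X1 + f i X2 - a i - b i \<le> f i X" for i
    proof -
      have mono: "c i j * g i j Y \<le> c i j * g i j X" if "j < n i" "Y \<subseteq> X" for j Y
        using terms[OF that(1)] polymatroidD(4)[of X "g i j" Y X] that(2) by (simp add: mult_left_mono)
      have s1: "f i X1 = (\<Sum>j\<in>Ev i. c i j * g i j X1) + a i"
        using fsum[OF X1X] sum_split_pred[of "\<lambda>j. c i j * g i j X1" "n i" "\<lambda>j. even_representable X (g i j)"]
        unfolding a_def Ev_def Od_def by simp
      have s2: "f i X2 = b i + (\<Sum>j\<in>Od i. c i j * g i j X2)"
        using fsum[OF X2X] sum_split_pred[of "\<lambda>j. c i j * g i j X2" "n i" "\<lambda>j. even_representable X (g i j)"]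
        unfolding b_def Ev_def Od_def by simp
      have s3: "f i X = (\<Sum>j\<in>Ev i. c i j * g i j X) + (\<Sum>j\<in>Od i. c i j * g i j X)"
        using fsum[of X i] sum_split_pred[of "\<lambda>j. c i j * g i j X" "n i" "\<lambda>j. even_representable X (g i j)"]
        unfolding Ev_def Od_def by simp
      have "(\<Sum>j\<in>Ev i. c i j * g i j X1) \<le> (\<Sum>j\<in>Ev i. c i j * g i j X)"
        using mono X1X by (intro sum_mono) (auto simp: Ev_def)
      moreover have "(\<Sum>j\<in>Od i. c i j * g i j X2) \<le> (\<Sum>j\<in>Od i. c i j * g i j X)"
        using mono X2X by (intro sum_mono) (auto simp: Od_def)
      ultimately show ?thesis using s1 s2 s3 by linarith
    qed
    have "(\<lambda>i. f i X1 + f i X2 - a i - b i) \<longlonglongrightarrow> \<Phi>e X1 + \<Phi>e X2 - 0 - 0"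
      using flim[OF X1X] flim[OF X2X] alim blim unfolding a_def b_def Od_def Ev_def
      by (intro tendsto_diff tendsto_add) auto
    moreover have "(\<lambda>i. f i X) \<longlonglongrightarrow> \<Phi>e X" using flim by simp
    ultimately have "\<Phi>e X1 + \<Phi>e X2 - 0 - 0 \<le> \<Phi>e X"
      using ineq by (intro LIMSEQ_le) auto
    then show False using on1[of X1] on2[of X2] onX PhiX assms(8) by simp
  qed
  then show ?thesis unfolding X_def \<Phi>_def \<Phi>e_def Let_def .
qed


end
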